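(* The canonical model $\mathcal{M}^{Can}$ is a Trust model; that is, $R$ is serial and transitive, and for each $\Gamma\in I$ and each propositional formula $\varphi$, $\|\varphi\|_\Gamma\neq\emptyset$ implies $\mathit{most}(\|\varphi\|_\Gamma)\neq\emptyset$.
   Context: $\mathcal{L}_T$: $\alpha::=\varphi\mid\varphi\rightsquigarrow\varphi\mid B(\alpha)\mid\alpha*\alpha\mid\neg\alpha$, with $\varphi$ ranging over classical propositional formulas (set $\mathcal{L}_{CL}$) and $*\in\{\land,\lor,\to,\leftrightarrow\}$. SBTrust is the Hilbert system ($\varphi,\psi,\chi,\varphi_i,\psi_i$ propositional; $\alpha,\beta\in\mathcal{L}_T$; rule outputs in $\mathcal{L}_T$): classical tautologies and Modus Ponens; $\varphi\rightsquigarrow\varphi$; $(\varphi\rightsquigarrow\bot)\to\neg\varphi$; $((\psi\land\chi)\rightsquigarrow\varphi)\to(\psi\rightsquigarrow(\chi\to\varphi))$; $(\neg(\varphi\leftrightarrow\psi)\rightsquigarrow\bot)\to((\varphi\rightsquigarrow\chi)\leftrightarrow(\psi\rightsquigarrow\chi))$; rule RCK: from $(\varphi_1\land\dots\land\varphi_n)\to\varphi_{n+1}$ infer $\bigwedge_{j\le n}(\psi\rightsquigarrow\varphi_j)\to(\psi\rightsquigarrow\varphi_{n+1})$; rule $\mathbf{S5_F}$: from $(\ell_1\land\dots\land\ell_n)\to\chi$ infer $(\ell_1\land\dots\land\ell_n)\to(\neg\chi\rightsquigarrow\bot)$, each $\ell_j$ being $\varphi_j\rightsquigarrow\psi_j$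 or its negation, $\chi$ propositional; $B(\alpha\to\beta)\to(B\alpha\to B\beta)$; $B\alpha\to\neg B\neg\alpha$; $B\alpha\to BB\alpha$; necessitation for $B$. MCS: $\Gamma\subseteq\mathcal{L}_T$ with $\Gamma\nvdash\bot$ and, for each $\alpha$, $\alpha\in\Gamma$ or $\neg\alpha\in\Gamma$. $\Gamma\leftrightsquigarrow\Delta$ iff the MCSs contain the same formulas of the form $\chi\rightsquigarrow\psi$; $[\Gamma]_\leftrightsquigarrow$ its class. $\rightsquigarrow_\varphi(\Gamma)=\{\psi:\varphi\rightsquigarrow\psi\in\Gamma\}$; $\Delta$ is $\varphi$-likely for $\Gamma$ if $\rightsquigarrow_\varphi(\Gamma)\subseteq\Delta$. $S_\Gamma=[\Gamma]_\leftrightsquigarrow\times\mathcal{L}_{CL}\times\{0,1,2\}$; $(\Delta,\varphi,i)\succeq_\Gamma(\Omega,\psi,j)$ iff ($\Delta$ is $\varphi$-likely for $\Gamma$ and $\varphi\in\Omega$) or ($i=1,j=0$) or ($i=2,j=1$) or ($i=0,j=2$). Fix a set $I$ containing exactly one representative of each $\leftrightsquigarrow$-class. The canonical model is $\mathcal{M}^{Can}=\langle S,(S_\Gamma)_{\Gamma\in I},(\succeq_\Gamma)_{\Gamma\in I},R,V\rangle$ with $S=\bigcup_{\Gamma\in I}S_\Gamma$, $V(p)=\{(\Delta,\varphi,i)\in S:p\in\Delta\}$, and $(\Delta,\varphi,i)R(\Omega,\psi,j)$ iff for all $\alpha\in\mathcal{L}_T$, $B(\alpha)\in\Delta\Rightarrow\alpha\in\Omega$.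 Truth: $s\models p$ iff $s\in V(p)$; Boolean clauses as usual; $s\models\varphi\rightsquigarrow\psi$ iff $\mathit{most}(\|\varphi\|_\Gamma)\subseteq\|\psi\|_\Gamma$ where $s\in S_\Gamma$; $s\models B(\alpha)$ iff $v\models\alpha$ for all $v$ with $sRv$; here $\|\varphi\|_\Gamma=\{v\in S_\Gamma:v\models\varphi\}$ and $\mathit{most}(X)=\{x\in X:\forall y\in X\,(y\succeq_\Gamma x\Rightarrow x\succeq_\Gamma y)\}$. A Trust model is a structure $\langle S,(S_i)_{i\in I},(\succeq_i)_{i\in I},R,V\rangle$ where $R\subseteq S\times S$ is serial and transitive, $(S_i)$ is a partition of $S$, each $\succeq_i\subseteq S_i\times S_i$, $V$ maps variables to subsets of $S$, and limitedness holds: for every $i$ and propositional $\varphi$, $\|\varphi\|_i\neq\emptyset\Rightarrow\mathit{most}(\|\varphi\|_i)\neq\emptyset$. *)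

theory Defs
  imports Main
begin

text \<open>One datatype for all formulas; the language L_T and the propositional
fragment L_CL are carved out by the predicates wf and is_prop.\<close>

datatype 'v fm =
    Var 'v
  | Bot
  | Top
  | Neg "'v fm"
  | And "'v fm" "'v fm"
  | Or "'v fm" "'v fm"
  | Imp "'v fm" "'v fm"
  | Iff "'v fm" "'v fm"
  | Cond "'v fm" "'v fm"
  | Bel "'v fm"

fun is_prop :: "'v fm \<Rightarrow> bool" where
  "is_prop (Var p) = True"
| "is_prop Bot = True"
| "is_prop Top = True"
| "is_prop (Neg a) = is_prop a"
| "is_prop (And a b) = (is_prop a \<and> is_prop b)"
| "is_prop (Or a b) = (is_prop a \<and> is_prop b)"
| "is_prop (Imp a b) = (is_prop a \<and> is_prop b)"
| "is_prop (Iff a b) = (is_prop a \<and> is_prop b)"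
| "is_prop (Cond a b) = False"
| "is_prop (Bel a) = False"

fun wf :: "'v fm \<Rightarrow> bool" where
  "wf (Var p) = True"
| "wf Bot = True"
| "wf Top = True"
| "wf (Neg a) = wf a"
| "wf (And a b) = (wf a \<and> wf b)"
| "wf (Or a b) = (wf a \<and> wf b)"
| "wf (Imp a b) = (wf a \<and> wf b)"
| "wf (Iff a b) = (wf a \<and> wf b)"
| "wf (Cond a b) = (is_prop a \<and> is_prop b)"
| "wf (Bel a) = wf a"

definition LCL :: "'v fm set" where "LCL = {\<phi>. is_prop \<phi>}"
definition LT :: "'v fm set" where "LT = {\<alpha>. wf \<alpha>}"

text \<open>Classical tautologies: formulas true under every Boolean valuation that
treats the modal subformulas (Cond, Bel) as atoms, i.e. substitution
instances of propositional tautologies.\<close>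
fun teval :: "('v fm \<Rightarrow> bool) \<Rightarrow> 'v fm \<Rightarrow> bool" where
  "teval f (Var p) = f (Var p)"
| "teval f Bot = False"
| "teval f Top = True"
| "teval f (Neg a) = (\<not> teval f a)"
| "teval f (And a b) = (teval f a \<and> teval f b)"
| "teval f (Or a b) = (teval f a \<or> teval f b)"
| "teval f (Imp a b) = (teval f a \<longrightarrow> teval f b)"
| "teval f (Iff a b) = (teval f a \<longleftrightarrow> teval f b)"
| "teval f (Cond a b) = f (Cond a b)"
| "teval f (Bel a) = f (Bel a)"

definition tautology :: "'v fm \<Rightarrow> bool" where
  "tautology \<alpha> \<longleftrightarrow> (\<forall>f. teval f \<alpha>)"

fun conjs :: "'v fm list \<Rightarrow> 'v fm" where
  "conjs [] = Top"
| "conjs [x] = x"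
| "conjs (x # y # ys) = And x (conjs (y # ys))"

definition is_lit :: "'v fm \<Rightarrow> bool" where
  "is_lit l \<longleftrightarrow> (\<exists>\<phi> \<psi>. is_prop \<phi> \<and> is_prop \<psi> \<and> (l = Cond \<phi> \<psi> \<or> l = Neg (Cond \<phi> \<psi>)))"

inductive derivable :: "'v fm \<Rightarrow> bool" where
  Taut: "wf \<alpha> \<Longrightarrow> tautology \<alpha> \<Longrightarrow> derivable \<alpha>"
| MP: "derivable \<alpha> \<Longrightarrow> derivable (Imp \<alpha> \<beta>) \<Longrightarrow> derivable \<beta>"
| Refl: "is_prop \<phi> \<Longrightarrow> derivable (Cond \<phi> \<phi>)"
| CondBot: "is_prop \<phi> \<Longrightarrow> derivable (Imp (Cond \<phi> Bot) (Neg \<phi>))"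
| CondAnd: "is_prop \<phi> \<Longrightarrow> is_prop \<psi> \<Longrightarrow> is_prop \<chi> \<Longrightarrow>
     derivable (Imp (Cond (And \<psi> \<chi>) \<phi>) (Cond \<psi> (Imp \<chi> \<phi>)))"
| CondEq: "is_prop \<phi> \<Longrightarrow> is_prop \<psi> \<Longrightarrow> is_prop \<chi> \<Longrightarrow>
     derivable (Imp (Cond (Neg (Iff \<phi> \<psi>)) Bot) (Iff (Cond \<phi> \<chi>) (Cond \<psi> \<chi>)))"
| RCK: "phis \<noteq> [] \<Longrightarrow> \<forall>x\<in>set phis. is_prop x \<Longrightarrow> is_prop \<phi> \<Longrightarrow> is_prop \<psi> \<Longrightarrow>
     derivable (Imp (conjs phis) \<phi>) \<Longrightarrow>
     derivable (Imp (conjs (map (Cond \<psi>) phis)) (Cond \<psi> \<phi>))"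
| S5F: "ls \<noteq> [] \<Longrightarrow> \<forall>l\<in>set ls. is_lit l \<Longrightarrow> is_prop \<chi> \<Longrightarrow>
     derivable (Imp (conjs ls) \<chi>) \<Longrightarrow>
     derivable (Imp (conjs ls) (Cond (Neg \<chi>) Bot))"
| K: "wf \<alpha> \<Longrightarrow> wf \<beta> \<Longrightarrow> derivable (Imp (Bel (Imp \<alpha> \<beta>)) (Imp (Bel \<alpha>) (Bel \<beta>)))"
| D: "wf \<alpha> \<Longrightarrow> derivable (Imp (Bel \<alpha>) (Neg (Bel (Neg \<alpha>))))"
| Four: "wf \<alpha> \<Longrightarrow> derivable (Imp (Bel \<alpha>) (Bel (Bel \<alpha>)))"
| Nec: "derivable \<alpha> \<Longrightarrow> derivable (Bel \<alpha>)"

definition derives :: "'v fm set \<Rightarrow> 'v fm \<Rightarrow> bool" where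
  "derives \<Gamma> \<alpha> \<longleftrightarrow> (\<exists>xs. set xs \<subseteq> \<Gamma> \<and> derivable (foldr Imp xs \<alpha>))"

definition MCS :: "'v fm set \<Rightarrow> bool" where
  "MCS \<Gamma> \<longleftrightarrow> \<Gamma> \<subseteq> LT \<and> \<not> derives \<Gamma> Bot \<and> (\<forall>\<alpha>\<in>LT. \<alpha> \<in> \<Gamma> \<or> Neg \<alpha> \<in> \<Gamma>)"

definition cond_equiv :: "'v fm set \<Rightarrow> 'v fm set \<Rightarrow> bool" where
  "cond_equiv \<Gamma> \<Delta> \<longleftrightarrow> (\<forall>\<chi> \<psi>. Cond \<chi> \<psi> \<in> \<Gamma> \<longleftrightarrow> Cond \<chi> \<psi> \<in> \<Delta>)"

definition cond_class :: "'v fm set \<Rightarrow> 'v fm set set" where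
  "cond_class \<Gamma> = {\<Delta>. MCS \<Delta> \<and> cond_equiv \<Gamma> \<Delta>}"

definition cond_cons :: "'v fm set \<Rightarrow> 'v fm \<Rightarrow> 'v fm set" where
  "cond_cons \<Gamma> \<phi> = {\<psi>. Cond \<phi> \<psi> \<in> \<Gamma>}"

definition likely :: "'v fm set \<Rightarrow> 'v fm \<Rightarrow> 'v fm set \<Rightarrow> bool" where
  "likely \<Gamma> \<phi> \<Delta> \<longleftrightarrow> cond_cons \<Gamma> \<phi> \<subseteq> \<Delta>"

type_synonym 'v world = "'v fm set \<times> 'v fm \<times> nat"

definition canS :: "'v fm set \<Rightarrow> 'v world set" where
  "canS \<Gamma> = cond_class \<Gamma> \<times> LCL \<times> {0, 1, 2}"

definition canPref :: "'v fm set \<Rightarrow> ('v world \<times> 'v world) set" where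
  "canPref \<Gamma> = {((\<Delta>, \<phi>, i), (\<Omega>, \<psi>, j)).
      (\<Delta>, \<phi>, i) \<in> canS \<Gamma> \<and> (\<Omega>, \<psi>, j) \<in> canS \<Gamma> \<and>
      ((likely \<Gamma> \<phi> \<Delta> \<and> \<phi> \<in> \<Omega>) \<or> (i = 1 \<and> j = 0) \<or> (i = 2 \<and> j = 1) \<or> (i = 0 \<and> j = 2))}"

definition representatives :: "'v fm set set \<Rightarrow> bool" where
  "representatives I \<longleftrightarrow> (\<forall>\<Gamma>\<in>I. MCS \<Gamma>) \<and>
     (\<forall>\<Delta>. MCS \<Delta> \<longrightarrow> (\<exists>!\<Gamma>. \<Gamma> \<in> I \<and> cond_equiv \<Gamma> \<Delta>))"

definition canWorlds :: "'v fm set set \<Rightarrow> 'v world set" where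
  "canWorlds I = (\<Union>\<Gamma>\<in>I. canS \<Gamma>)"

definition canR :: "'v fm set set \<Rightarrow> ('v world \<times> 'v world) set" where
  "canR I = {((\<Delta>, \<phi>, i), (\<Omega>, \<psi>, j)).
      (\<Delta>, \<phi>, i) \<in> canWorlds I \<and> (\<Omega>, \<psi>, j) \<in> canWorlds I \<and>
      (\<forall>\<alpha>\<in>LT. Bel \<alpha> \<in> \<Delta> \<longrightarrow> \<alpha> \<in> \<Omega>)}"

definition canV :: "'v fm set set \<Rightarrow> 'v \<Rightarrow> 'v world set" where
  "canV I p = {(\<Delta>, \<phi>, i) \<in> canWorlds I. Var p \<in> \<Delta>}"

definition most :: "('w \<times> 'w) set \<Rightarrow> 'w set \<Rightarrow> 'w set" where
  "most r X = {x \<in> X. \<forall>y\<in>X. (y, x) \<in> r \<longrightarrow> (x, y) \<in> r}"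

fun sat :: "'i set \<Rightarrow> ('i \<Rightarrow> 'w set) \<Rightarrow> ('i \<Rightarrow> ('w \<times> 'w) set) \<Rightarrow> ('w \<times> 'w) set
            \<Rightarrow> ('v \<Rightarrow> 'w set) \<Rightarrow> 'w \<Rightarrow> 'v fm \<Rightarrow> bool" where
  "sat I Sf P R V s (Var p) = (s \<in> V p)"
| "sat I Sf P R V s Bot = False"
| "sat I Sf P R V s Top = True"
| "sat I Sf P R V s (Neg a) = (\<not> sat I Sf P R V s a)"
| "sat I Sf P R V s (And a b) = (sat I Sf P R V s a \<and> sat I Sf P R V s b)"
| "sat I Sf P R V s (Or a b) = (sat I Sf P R V s a \<or> sat I Sf P R V s b)"
| "sat I Sf P R V s (Imp a b) = (sat I Sf P R V s a \<longrightarrow> sat I Sf P R V s b)"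
| "sat I Sf P R V s (Iff a b) = (sat I Sf P R V s a \<longleftrightarrow> sat I Sf P R V s b)"
| "sat I Sf P R V s (Cond a b) =
     (\<exists>i\<in>I. s \<in> Sf i \<and>
        most (P i) {v \<in> Sf i. sat I Sf P R V v a} \<subseteq> {v \<in> Sf i. sat I Sf P R V v b})"
| "sat I Sf P R V s (Bel a) = (\<forall>v. (s, v) \<in> R \<longrightarrow> sat I Sf P R V v a)"

definition truth_set :: "'i set \<Rightarrow> ('i \<Rightarrow> 'w set) \<Rightarrow> ('i \<Rightarrow> ('w \<times> 'w) set) \<Rightarrow> ('w \<times> 'w) set
            \<Rightarrow> ('v \<Rightarrow> 'w set) \<Rightarrow> 'i \<Rightarrow> 'v fm \<Rightarrow> 'w set" where
  "truth_set I Sf P R V i \<phi> = {v \<in> Sf i. sat I Sf P R V v \<phi>}"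

definition trust_model :: "'w set \<Rightarrow> 'i set \<Rightarrow> ('i \<Rightarrow> 'w set) \<Rightarrow> ('i \<Rightarrow> ('w \<times> 'w) set)
            \<Rightarrow> ('w \<times> 'w) set \<Rightarrow> ('v \<Rightarrow> 'w set) \<Rightarrow> bool" where
  "trust_model S I Sf P R V \<longleftrightarrow>
     R \<subseteq> S \<times> S \<and>
     (\<forall>s\<in>S. \<exists>t. (s, t) \<in> R) \<and>
     trans R \<and>
     (\<forall>i\<in>I. Sf i \<noteq> {}) \<and>
     (\<forall>i\<in>I. \<forall>j\<in>I. i \<noteq> j \<longrightarrow> Sf i \<inter> Sf j = {}) \<and>
     (\<Union>i\<in>I. Sf i) = S \<and>
     (\<forall>i\<in>I. P i \<subseteq> Sf i \<times> Sf i) \<and>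
     (\<forall>p. V p \<subseteq> S) \<and>
     (\<forall>i\<in>I. \<forall>\<phi>. is_prop \<phi> \<longrightarrow>
        truth_set I Sf P R V i \<phi> \<noteq> {} \<longrightarrow> most (P i) (truth_set I Sf P R V i \<phi>) \<noteq> {})"

end

theory Submission imports Defs begin

lemma teval_foldr: "teval f (foldr Imp xs c) = ((\<forall>x\<in>set xs. teval f x) \<longrightarrow> teval f c)"
  by (induction xs) auto

lemma wf_foldr: "wf (foldr Imp xs c) = ((\<forall>x\<in>set xs. wf x) \<and> wf c)"
  by (induction xs) auto

lemma teval_conjs: "teval f (conjs ys) = (\<forall>y\<in>set ys. teval f y)"
  by (induction ys rule: conjs.induct) auto

lemma wf_conjs: "wf (conjs ys) = (\<forall>y\<in>set ys. wf y)"
  by (induction ys rule: conjs.induct) auto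

lemma prop_conjs: "is_prop (conjs ys) = (\<forall>y\<in>set ys. is_prop y)"
  by (induction ys rule: conjs.induct) auto

lemma prop_wf: "is_prop a \<Longrightarrow> wf a"
  by (induction a) auto

lemma lit_wf: "is_lit l \<Longrightarrow> wf l"
  unfolding is_lit_def by auto

lemma derivable_wf: "derivable a \<Longrightarrow> wf a"
proof (induction rule: derivable.induct)
  case (RCK phis \<phi> \<psi>)
  then show ?case by (auto simp: wf_conjs prop_conjs prop_wf)
next
  case (S5F ls \<chi>)
  then show ?case by (auto simp: wf_conjs lit_wf prop_wf)
qed (auto simp: prop_wf)

lemma taut_cons:
  assumes "\<forall>h\<in>set hs. derivable h" "wf c" "\<forall>f. (\<forall>h\<in>set hs. teval f h) \<longrightarrow> teval f c"
  shows "derivable c"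
  using assms
proof (induction hs arbitrary: c)
  case Nil
  then show ?case by (auto intro: Taut simp: tautology_def)
next
  case (Cons h hs)
  have "derivable (Imp h c)"
    using Cons.prems derivable_wf by (intro Cons.IH) auto
  then show ?case using Cons.prems derivable.MP by auto
qed

lemma mcs_LT: "MCS \<Gamma> \<Longrightarrow> a \<in> \<Gamma> \<Longrightarrow> wf a"
  unfolding MCS_def LT_def by auto

lemma mcs_closed:
  assumes "MCS \<Gamma>" "set hs \<subseteq> \<Gamma>" "wf c" "\<forall>f. (\<forall>h\<in>set hs. teval f h) \<longrightarrow> teval f c"
  shows "c \<in> \<Gamma>"
proof (rule ccontr)
  assume "c \<notin> \<Gamma>"
  then have n: "Neg c \<in> \<Gamma>" using assms unfolding MCS_def LT_def by auto
  have "derivable (foldr Imp (Neg c # hs) Bot)"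
    using assms n mcs_LT[OF assms(1)]
    by (intro Taut) (auto simp: tautology_def teval_foldr wf_foldr)
  then have "derives \<Gamma> Bot" unfolding derives_def using n assms(2)
    by (intro exI[of _ "Neg c # hs"]) auto
  then show False using assms(1) unfolding MCS_def by auto
qed


lemma mcs_neg: assumes "MCS \<Gamma>" "wf a" shows "(Neg a \<in> \<Gamma>) = (a \<notin> \<Gamma>)"
proof
  assume "Neg a \<in> \<Gamma>" show "a \<notin> \<Gamma>"
  proof
    assume "a \<in> \<Gamma>"
    then have "Bot \<in> \<Gamma>" using mcs_closed[OF assms(1), of "[a, Neg a]" Bot] \<open>Neg a \<in> \<Gamma>\<close> by auto
    then have "derives \<Gamma> Bot" unfolding derives_def
      by (intro exI[of _ "[Bot]"]) (auto intro!: Taut simp: tautology_def)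
    then show False using assms(1) unfolding MCS_def by auto
  qed
next
  assume "a \<notin> \<Gamma>" then show "Neg a \<in> \<Gamma>" using assms unfolding MCS_def LT_def by auto
qed

lemma mcs_derivable: assumes "MCS \<Gamma>" "derivable a" shows "a \<in> \<Gamma>"
proof (rule ccontr)
  assume "a \<notin> \<Gamma>"
  then have "Neg a \<in> \<Gamma>" using mcs_neg assms derivable_wf by blast
  moreover have "derivable (Imp (Neg a) Bot)"
    using assms derivable_wf by (intro taut_cons[of "[a]"]) auto
  ultimately have "derives \<Gamma> Bot" unfolding derives_def
    by (intro exI[of _ "[Neg a]"]) auto
  then show False using assms(1) unfolding MCS_def by auto
qed

lemma mcs_mp: "MCS \<Gamma> \<Longrightarrow> a \<in> \<Gamma> \<Longrightarrow> Imp a b \<in> \<Gamma> \<Longrightarrow> b \<in> \<Gamma>"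
  using mcs_closed[of \<Gamma> "[a, Imp a b]" b] mcs_LT[of \<Gamma> "Imp a b"] by auto

lemma mcs_bin:
  assumes "MCS \<Delta>" "wf a" "wf b" "wf c" "\<forall>f. teval f c = g (teval f a) (teval f b)"
  shows "(c \<in> \<Delta>) = g (a \<in> \<Delta>) (b \<in> \<Delta>)"
proof -
  define la where "la = (if a \<in> \<Delta> then a else Neg a)"
  define lb where "lb = (if b \<in> \<Delta> then b else Neg b)"
  have la: "la \<in> \<Delta>" "\<And>f. teval f la \<Longrightarrow> teval f a = (a \<in> \<Delta>)"
    using mcs_neg[OF assms(1,2)] by (auto simp: la_def split: if_splits)
  have lb: "lb \<in> \<Delta>" "\<And>f. teval f lb \<Longrightarrow> teval f b = (b \<in> \<Delta>)"
    using mcs_neg[OF assms(1,3)] by (auto simp: lb_def split: if_splits)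
  show ?thesis
  proof (cases "g (a \<in> \<Delta>) (b \<in> \<Delta>)")
    case True
    then have "c \<in> \<Delta>" using la lb assms
      by (intro mcs_closed[OF assms(1), of "[la, lb]"]) auto
    then show ?thesis using True by simp
  next
    case False
    then have "Neg c \<in> \<Delta>" using la lb assms
      by (intro mcs_closed[OF assms(1), of "[la, lb]"]) auto
    then show ?thesis using False mcs_neg[OF assms(1,4)] by simp
  qed
qed

lemma lindenbaum:
  assumes "X \<subseteq> LT" "\<not> derives X Bot"
  shows "\<exists>M. MCS M \<and> X \<subseteq> M"
proof -
  define A where "A = {Y. X \<subseteq> Y \<and> Y \<subseteq> LT \<and> \<not> derives Y Bot}"
  have "\<exists>M\<in>A. \<forall>Z\<in>A. M \<subseteq> Z \<longrightarrow> Z = M"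
  proof (rule subset_Zorn_nonempty)
    show "A \<noteq> {}" using assms unfolding A_def by auto
  next
    fix C assume C: "C \<noteq> {}" "subset.chain A C"
    have "\<not> derives (\<Union>C) Bot"
    proof
      assume "derives (\<Union>C) Bot"
      then obtain xs where xs: "set xs \<subseteq> \<Union>C" "derivable (foldr Imp xs Bot)"
        unfolding derives_def by auto
      show False
      proof (cases "xs = []")
        case True
        have "set xs \<subseteq> X" using True by simp
        then show False using xs(2) assms(2) unfolding derives_def by blast
      next
        case False
        then obtain B where "B \<in> C" "set xs \<subseteq> B"
          using finite_subset_Union_chain[of "set xs" C A] xs C by auto
        then show False using xs C unfolding A_def subset.chain_def derives_def by auto
      qed
    qed
    then show "\<Union>C \<in> A" using C unfolding A_def subset.chain_def by blast
  qed
  then obtain M where M: "M \<in> A" "\<And>Z. Z \<in> A \<Longrightarrow> M \<subseteq> Z \<Longrightarrow> Z = M" by auto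
  have "\<alpha> \<in> M \<or> Neg \<alpha> \<in> M" if "\<alpha> \<in> LT" for \<alpha>
  proof (rule ccontr)
    assume n: "\<not> (\<alpha> \<in> M \<or> Neg \<alpha> \<in> M)"
    note aLT = that
    have w: "wf \<alpha>" using that unfolding LT_def by auto
    have "insert \<alpha> M \<notin> A" using M(2)[of "insert \<alpha> M"] n by auto
    then obtain xs where xs: "set xs \<subseteq> insert \<alpha> M" "derivable (foldr Imp xs Bot)"
      using M(1) aLT unfolding A_def derives_def by auto
    have "insert (Neg \<alpha>) M \<notin> A" using M(2)[of "insert (Neg \<alpha>) M"] n by auto
    then obtain ys where ys: "set ys \<subseteq> insert (Neg \<alpha>) M" "derivable (foldr Imp ys Bot)"
      using M(1) aLT unfolding A_def derives_def LT_def by auto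
    define zs where "zs = filter (\<lambda>x. x \<noteq> \<alpha>) xs @ filter (\<lambda>x. x \<noteq> Neg \<alpha>) ys"
    have wz: "\<forall>x\<in>set zs. wf x" using M(1) xs(1) ys(1) unfolding A_def LT_def zs_def by auto
    have "derivable (foldr Imp zs Bot)"
      using xs ys wz
    proof (intro taut_cons[of "[foldr Imp xs Bot, foldr Imp ys Bot]"])
      show "\<forall>f. (\<forall>h\<in>set [foldr Imp xs Bot, foldr Imp ys Bot]. teval f h) \<longrightarrow> teval f (foldr Imp zs Bot)"
      proof (intro allI impI)
        fix f assume h: "\<forall>h\<in>set [foldr Imp xs Bot, foldr Imp ys Bot]. teval f h"
        show "teval f (foldr Imp zs Bot)"
        proof (cases "teval f \<alpha>")
          case True
          then show ?thesis using h by (auto simp: teval_foldr zs_def)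
        next
          case False
          then show ?thesis using h by (auto simp: teval_foldr zs_def)
        qed
      qed
    qed (use xs ys wz in \<open>auto simp: wf_foldr\<close>)
    then have "derives M Bot" unfolding derives_def using xs ys
      by (intro exI[of _ zs]) (auto simp: zs_def)
    then show False using M(1) unfolding A_def by auto
  qed
  then have "MCS M" using M(1) unfolding MCS_def A_def by auto
  then show ?thesis using M(1) unfolding A_def by auto
qed


lemma mcs_Bot: assumes "MCS \<Gamma>" shows "Bot \<notin> \<Gamma>"
proof
  assume "Bot \<in> \<Gamma>"
  moreover have "derivable (foldr Imp [Bot] Bot)" by (auto intro!: Taut simp: tautology_def)
  ultimately have "derives \<Gamma> Bot" unfolding derives_def by (intro exI[of _ "[Bot]"]) auto
  then show False using assms unfolding MCS_def by auto
qed

lemma mcs_Top: "MCS \<Gamma> \<Longrightarrow> Top \<in> \<Gamma>"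
  by (rule mcs_derivable, assumption, rule Taut) (auto simp: tautology_def)

lemma world_mcs: "(\<Delta>, \<psi>, i) \<in> canWorlds I \<Longrightarrow> MCS \<Delta>"
  unfolding canWorlds_def canS_def cond_class_def by auto

lemma truth_prop:
  assumes "(\<Delta>, \<psi>, i) \<in> canWorlds I" "is_prop \<phi>"
  shows "sat I canS canPref (canR I) (canV I) (\<Delta>, \<psi>, i) \<phi> = (\<phi> \<in> \<Delta>)"
  using assms(2)
proof (induction \<phi>)
  case (Var x)
  then show ?case using assms(1) by (simp add: canV_def)
next
  case Bot
  then show ?case using mcs_Bot world_mcs[OF assms(1)] by simp
next
  case Top
  then show ?case using mcs_Top world_mcs[OF assms(1)] by simp
next
  case (Neg \<phi>)
  then show ?case using mcs_neg[OF world_mcs[OF assms(1)], of \<phi>] prop_wf[of \<phi>] by simp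
next
  case (And a b)
  then show ?case using mcs_bin[OF world_mcs[OF assms(1)], of a b "And a b" "\<lambda>x y. x \<and> y"] prop_wf[of a] prop_wf[of b] by simp
next
  case (Or a b)
  then show ?case using mcs_bin[OF world_mcs[OF assms(1)], of a b "Or a b" "\<lambda>x y. x \<or> y"] prop_wf[of a] prop_wf[of b] by simp
next
  case (Imp a b)
  then show ?case using mcs_bin[OF world_mcs[OF assms(1)], of a b "Imp a b" "\<lambda>x y. x \<longrightarrow> y"] prop_wf[of a] prop_wf[of b] by simp
next
  case (Iff a b)
  then show ?case using mcs_bin[OF world_mcs[OF assms(1)], of a b "Iff a b" "\<lambda>x y. x = y"] prop_wf[of a] prop_wf[of b] by simp
qed auto

lemma bel_chain:
  assumes "MCS \<Delta>"
  shows "Bel (foldr Imp xs c) \<in> \<Delta> \<Longrightarrow> \<forall>x\<in>set xs. Bel x \<in> \<Delta> \<Longrightarrow> Bel c \<in> \<Delta>"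
proof (induction xs)
  case Nil
  then show ?case by simp
next
  case (Cons x xs)
  have w: "wf x" "wf (foldr Imp xs c)" using mcs_LT[OF assms Cons.prems(1)] by auto
  have "Imp (Bel (Imp x (foldr Imp xs c))) (Imp (Bel x) (Bel (foldr Imp xs c))) \<in> \<Delta>"
    using mcs_derivable[OF assms K[OF w]] .
  then have "Imp (Bel x) (Bel (foldr Imp xs c)) \<in> \<Delta>"
    using Cons.prems(1) mcs_mp[OF assms, of "Bel (Imp x (foldr Imp xs c))" "Imp (Bel x) (Bel (foldr Imp xs c))"] by simp
  then have "Bel (foldr Imp xs c) \<in> \<Delta>"
    using Cons.prems(2) mcs_mp[OF assms, of "Bel x" "Bel (foldr Imp xs c)"] by simp
  then show ?case using Cons by auto
qed

lemma serial_cons: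
  assumes "MCS \<Delta>"
  shows "\<not> derives {\<alpha>\<in>LT. Bel \<alpha> \<in> \<Delta>} Bot"
proof
  assume "derives {\<alpha>\<in>LT. Bel \<alpha> \<in> \<Delta>} Bot"
  then obtain xs where xs: "set xs \<subseteq> {\<alpha>\<in>LT. Bel \<alpha> \<in> \<Delta>}" "derivable (foldr Imp xs Bot)"
    unfolding derives_def by auto
  have "Bel (foldr Imp xs Bot) \<in> \<Delta>" using mcs_derivable[OF assms Nec[OF xs(2)]] .
  then have b: "Bel Bot \<in> \<Delta>" using bel_chain[OF assms] xs(1) by auto
  have "Imp (Bel Bot) (Neg (Bel (Neg Bot))) \<in> \<Delta>" using mcs_derivable[OF assms D[of Bot]] by simp
  then have "Neg (Bel (Neg Bot)) \<in> \<Delta>" using mcs_mp[OF assms b] by blast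
  moreover have "Bel (Neg Bot) \<in> \<Delta>"
    by (rule mcs_derivable[OF assms], rule Nec, rule Taut) (auto simp: tautology_def)
  ultimately show False using mcs_neg[OF assms, of "Bel (Neg Bot)"] by simp
qed


lemma mcs_imp: "MCS \<Gamma> \<Longrightarrow> derivable (Imp a b) \<Longrightarrow> a \<in> \<Gamma> \<Longrightarrow> b \<in> \<Gamma>"
  using mcs_mp[of \<Gamma> a b] mcs_derivable[of \<Gamma> "Imp a b"] by blast

lemma likely_exists:
  assumes G: "MCS \<Gamma>" and p: "is_prop \<phi>" and D0: "MCS \<Delta>0" "cond_equiv \<Gamma> \<Delta>0" "\<phi> \<in> \<Delta>0"
  shows "\<exists>\<Delta>. MCS \<Delta> \<and> cond_equiv \<Gamma> \<Delta> \<and> cond_cons \<Gamma> \<phi> \<subseteq> \<Delta> \<and> \<phi> \<in> \<Delta>"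
proof -
  have wphi: "wf \<phi>" using p prop_wf by auto
  have nb: "Cond \<phi> Bot \<notin> \<Gamma>"
  proof
    assume "Cond \<phi> Bot \<in> \<Gamma>"
    then have "Cond \<phi> Bot \<in> \<Delta>0" using D0(2) unfolding cond_equiv_def by auto
    then have "Neg \<phi> \<in> \<Delta>0" using mcs_imp[OF D0(1) CondBot[OF p]] by blast
    then show False using mcs_neg[OF D0(1) wphi] D0(3) by blast
  qed
  have refl: "Cond \<phi> \<phi> \<in> \<Gamma>" using mcs_derivable[OF G Refl[OF p]] .
  define X where "X = cond_cons \<Gamma> \<phi> \<union> {\<phi>} \<union> {Cond a b | a b. Cond a b \<in> \<Gamma>}
     \<union> {Neg (Cond a b) | a b. Cond a b \<notin> \<Gamma> \<and> is_prop a \<and> is_prop b}"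
  have condprop: "Cond a b \<in> \<Gamma> \<Longrightarrow> is_prop a \<and> is_prop b" for a b
    using mcs_LT[OF G] by fastforce
  have XLT: "X \<subseteq> LT" unfolding X_def LT_def cond_cons_def using condprop wphi
    by (auto simp: prop_wf)
  have tri: "x = \<phi> \<or> Cond \<phi> x \<in> \<Gamma> \<or> (is_lit x \<and> x \<in> \<Gamma>)" if "x \<in> X" for x
  proof -
    { fix a b assume "x = Cond a b" "Cond a b \<in> \<Gamma>"
      then have "is_lit x \<and> x \<in> \<Gamma>" using condprop unfolding is_lit_def by blast }
    moreover
    { fix a b assume ab: "x = Neg (Cond a b)" "Cond a b \<notin> \<Gamma>" "is_prop a" "is_prop b"
      then have "x \<in> \<Gamma>" using mcs_neg[OF G, of "Cond a b"] by simp
      then have "is_lit x \<and> x \<in> \<Gamma>" using ab unfolding is_lit_def by blast }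
    ultimately show ?thesis using that unfolding X_def cond_cons_def by blast
  qed
  have cons: "\<not> derives X Bot"
  proof
    assume "derives X Bot"
    then obtain xs where xs: "set xs \<subseteq> X" "derivable (foldr Imp xs Bot)"
      unfolding derives_def by auto
    define \<psi>s where "\<psi>s = Top # filter (\<lambda>x. Cond \<phi> x \<in> \<Gamma>) xs"
    define ls where "ls = Cond \<phi> \<phi> # filter (\<lambda>x. is_lit x \<and> x \<in> \<Gamma>) xs"
    define Q where "Q = conjs \<psi>s"
    define P where "P = And \<phi> Q"
    have psprop: "\<forall>x\<in>set \<psi>s. is_prop x" unfolding \<psi>s_def using condprop by auto
    have Qprop: "is_prop Q" unfolding Q_def using psprop prop_conjs by auto
    have Pprop: "is_prop P" unfolding P_def using Qprop p by simp
    have lslit: "\<forall>l\<in>set ls. is_lit l" unfolding ls_def is_lit_def using p by auto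
    have lsG: "set ls \<subseteq> \<Gamma>" unfolding ls_def using refl by auto
    have h1: "derivable (Imp (conjs ls) (Neg P))"
    proof (rule taut_cons[of "[foldr Imp xs Bot]"])
      show "\<forall>h\<in>set [foldr Imp xs Bot]. derivable h" using xs by simp
      show "wf (Imp (conjs ls) (Neg P))" using lslit Pprop
        by (auto simp: wf_conjs lit_wf prop_wf)
      show "\<forall>f. (\<forall>h\<in>set [foldr Imp xs Bot]. teval f h) \<longrightarrow> teval f (Imp (conjs ls) (Neg P))"
      proof (intro allI impI)
        fix f assume h: "\<forall>h\<in>set [foldr Imp xs Bot]. teval f h"
        show "teval f (Imp (conjs ls) (Neg P))"
        proof (cases "teval f (conjs ls) \<and> teval f P")
          case True
          then have "\<forall>x\<in>set xs. teval f x" using tri xs(1)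
            by (auto simp: teval_conjs ls_def P_def Q_def \<psi>s_def)
          then show ?thesis using h by (simp add: teval_foldr)
        next
          case False
          then show ?thesis by auto
        qed
      qed
    qed
    have "conjs ls \<in> \<Gamma>" using mcs_closed[OF G lsG] lslit
      by (auto simp: teval_conjs wf_conjs lit_wf)
    then have c1: "Cond (Neg (Neg P)) Bot \<in> \<Gamma>"
      using mcs_imp[OF G S5F[OF _ lslit _ h1]] Pprop unfolding ls_def by simp
    have "derivable (Imp (conjs [Cond \<phi> \<phi>]) (Iff (Neg (Neg P)) P))"
      using p Pprop by (intro taut_cons[of "[]"]) (auto simp: prop_wf)
    from S5F[OF _ _ _ this] have "derivable (Imp (Cond \<phi> \<phi>) (Cond (Neg (Iff (Neg (Neg P)) P)) Bot))"
      using p Pprop unfolding is_lit_def by auto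
    then have c2: "Cond (Neg (Iff (Neg (Neg P)) P)) Bot \<in> \<Gamma>" using mcs_imp[OF G _ refl] by blast
    have "Iff (Cond (Neg (Neg P)) Bot) (Cond P Bot) \<in> \<Gamma>"
      using mcs_imp[OF G CondEq[of "Neg (Neg P)" P Bot] c2] Pprop by simp
    then have c3: "Cond P Bot \<in> \<Gamma>"
      using mcs_closed[OF G, of "[Iff (Cond (Neg (Neg P)) Bot) (Cond P Bot), Cond (Neg (Neg P)) Bot]" "Cond P Bot"] c1 Pprop
      by (auto simp: prop_wf)
    have c4: "Cond \<phi> (Imp Q Bot) \<in> \<Gamma>"
      using mcs_imp[OF G CondAnd[of Bot \<phi> Q]] c3 p Qprop unfolding P_def by simp
    have "derivable (Imp (conjs [\<phi>]) Top)"
      using p by (intro taut_cons[of "[]"]) (auto simp: prop_wf)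
    from RCK[OF _ _ _ p this] have "derivable (Imp (Cond \<phi> \<phi>) (Cond \<phi> Top))"
      using p by simp
    then have ctop: "Cond \<phi> Top \<in> \<Gamma>" using mcs_imp[OF G _ refl] by blast
    define phis where "phis = Imp Q Bot # \<psi>s"
    have phisprop: "\<forall>x\<in>set phis. is_prop x" unfolding phis_def using psprop Qprop by auto
    have "derivable (Imp (conjs phis) Bot)"
      using phisprop by (intro taut_cons[of "[]"])
        (auto simp: wf_conjs prop_wf teval_conjs phis_def Q_def)
    from RCK[OF _ phisprop _ p this]
    have r: "derivable (Imp (conjs (map (Cond \<phi>) phis)) (Cond \<phi> Bot))"
      unfolding phis_def by simp
    have mapG: "set (map (Cond \<phi>) phis) \<subseteq> \<Gamma>"
      using c4 ctop unfolding phis_def \<psi>s_def by auto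
    have "conjs (map (Cond \<phi>) phis) \<in> \<Gamma>"
    proof (rule mcs_closed[OF G mapG])
      show "wf (conjs (map (Cond \<phi>) phis))" unfolding wf_conjs using mcs_LT[OF G] mapG by blast
    qed (simp add: teval_conjs)
    then have "Cond \<phi> Bot \<in> \<Gamma>" using mcs_imp[OF G r] by blast
    then show False using nb by blast
  qed
  obtain \<Delta> where D: "MCS \<Delta>" "X \<subseteq> \<Delta>" using lindenbaum[OF XLT cons] by blast
  have "cond_equiv \<Gamma> \<Delta>"
    unfolding cond_equiv_def
  proof (intro allI iffI)
    fix a b assume "Cond a b \<in> \<Gamma>" then show "Cond a b \<in> \<Delta>" using D(2) unfolding X_def by blast
  next
    fix a b assume ab: "Cond a b \<in> \<Delta>"
    show "Cond a b \<in> \<Gamma>"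
    proof (rule ccontr)
      assume n: "Cond a b \<notin> \<Gamma>"
      have w: "wf (Cond a b)" using mcs_LT[OF D(1) ab] .
      then have "Neg (Cond a b) \<in> \<Delta>" using n D(2) unfolding X_def by auto
      then show False using mcs_neg[OF D(1) w] ab by blast
    qed
  qed
  then show ?thesis using D unfolding X_def by blast
qed


lemma canS_worlds: "\<Gamma> \<in> I \<Longrightarrow> x \<in> canS \<Gamma> \<Longrightarrow> x \<in> canWorlds I"
  unfolding canWorlds_def by blast

lemma rep_class:
  assumes "representatives I" "MCS \<Omega>"
  shows "\<exists>\<Gamma>\<in>I. \<Omega> \<in> cond_class \<Gamma>"
  using assms unfolding representatives_def cond_class_def by blast

theorem lemma4:
  fixes I :: "'v fm set set"
  assumes "representatives I"
  shows "trust_model (canWorlds I) I canS canPref (canR I) (canV I)"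
proof -
  have IM: "\<And>\<Gamma>. \<Gamma> \<in> I \<Longrightarrow> MCS \<Gamma>" using assms unfolding representatives_def by blast
  have ceq_refl: "cond_equiv \<Gamma> \<Gamma>" for \<Gamma> :: "'v fm set" unfolding cond_equiv_def by blast
  have TopL: "Top \<in> LCL" unfolding LCL_def by simp
  have R1: "canR I \<subseteq> canWorlds I \<times> canWorlds I" unfolding canR_def by auto
  have R2: "\<forall>s\<in>canWorlds I. \<exists>t. (s, t) \<in> canR I"
  proof
    fix s assume s: "s \<in> canWorlds I"
    obtain \<Delta> \<phi> i where si: "s = (\<Delta>, \<phi>, i)" by (cases s) auto
    have D: "MCS \<Delta>" using world_mcs s si by blast
    obtain \<Omega> where O: "MCS \<Omega>" "{\<alpha>\<in>LT. Bel \<alpha> \<in> \<Delta>} \<subseteq> \<Omega>"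
      using lindenbaum[OF _ serial_cons[OF D]] by blast
    obtain \<Gamma> where G: "\<Gamma> \<in> I" "\<Omega> \<in> cond_class \<Gamma>" using rep_class[OF assms O(1)] by blast
    have "(\<Omega>, Top, 0) \<in> canWorlds I"
      using canS_worlds[OF G(1)] G(2) TopL unfolding canS_def by auto
    then have "(s, (\<Omega>, Top, 0)) \<in> canR I" using s si O(2) unfolding canR_def by auto
    then show "\<exists>t. (s, t) \<in> canR I" by blast
  qed
  have R3: "trans (canR I)"
  proof (rule transI)
    fix x y z assume xy: "(x, y) \<in> canR I" and yz: "(y, z) \<in> canR I"
    obtain \<Delta> a i where x: "x = (\<Delta>, a, i)" by (cases x) auto
    obtain \<Omega> b j where y: "y = (\<Omega>, b, j)" by (cases y) auto
    obtain \<Theta> c k where z: "z = (\<Theta>, c, k)" by (cases z) auto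
    have A: "x \<in> canWorlds I" "y \<in> canWorlds I" "z \<in> canWorlds I"
      "\<forall>\<alpha>\<in>LT. Bel \<alpha> \<in> \<Delta> \<longrightarrow> \<alpha> \<in> \<Omega>" "\<forall>\<alpha>\<in>LT. Bel \<alpha> \<in> \<Omega> \<longrightarrow> \<alpha> \<in> \<Theta>"
      using xy yz x y z unfolding canR_def by auto
    have D: "MCS \<Delta>" using world_mcs A(1) x by blast
    have "\<alpha> \<in> \<Theta>" if "\<alpha> \<in> LT" "Bel \<alpha> \<in> \<Delta>" for \<alpha>
    proof -
      have w: "wf \<alpha>" using that unfolding LT_def by simp
      have "Bel (Bel \<alpha>) \<in> \<Delta>" using mcs_imp[OF D Four[OF w] that(2)] .
      moreover have "Bel \<alpha> \<in> LT" using w unfolding LT_def by simp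
      ultimately have "Bel \<alpha> \<in> \<Omega>" using A(4) by blast
      then show ?thesis using A(5) that(1) by blast
    qed
    then show "(x, z) \<in> canR I" using A x z unfolding canR_def by auto
  qed
  have S1: "\<forall>\<Gamma>\<in>I. canS \<Gamma> \<noteq> {}"
  proof
    fix \<Gamma> assume "\<Gamma> \<in> I"
    then have "(\<Gamma>, Top, 0) \<in> canS \<Gamma>" using IM ceq_refl TopL
      unfolding canS_def cond_class_def by auto
    then show "canS \<Gamma> \<noteq> {}" by blast
  qed
  have S2: "\<forall>\<Gamma>\<in>I. \<forall>\<Gamma>'\<in>I. \<Gamma> \<noteq> \<Gamma>' \<longrightarrow> canS \<Gamma> \<inter> canS \<Gamma>' = {}"
  proof (intro ballI impI)
    fix \<Gamma> \<Gamma>' assume G: "\<Gamma> \<in> I" "\<Gamma>' \<in> I" "\<Gamma> \<noteq> \<Gamma>'"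
    show "canS \<Gamma> \<inter> canS \<Gamma>' = {}"
    proof (rule ccontr)
      assume "canS \<Gamma> \<inter> canS \<Gamma>' \<noteq> {}"
      then obtain \<Delta> where "\<Delta> \<in> cond_class \<Gamma>" "\<Delta> \<in> cond_class \<Gamma>'"
        unfolding canS_def by auto
      then have "MCS \<Delta>" "cond_equiv \<Gamma> \<Delta>" "cond_equiv \<Gamma>' \<Delta>" unfolding cond_class_def by auto
      then show False using assms G unfolding representatives_def by blast
    qed
  qed
  have S3: "(\<Union>\<Gamma>\<in>I. canS \<Gamma>) = canWorlds I" unfolding canWorlds_def ..
  have P1: "\<forall>\<Gamma>\<in>I. canPref \<Gamma> \<subseteq> canS \<Gamma> \<times> canS \<Gamma>" unfolding canPref_def by auto
  have V1: "\<forall>p. canV I p \<subseteq> canWorlds I" unfolding canV_def by auto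
  have L: "\<forall>\<Gamma>\<in>I. \<forall>\<phi>. is_prop \<phi> \<longrightarrow>
        truth_set I canS canPref (canR I) (canV I) \<Gamma> \<phi> \<noteq> {} \<longrightarrow>
        most (canPref \<Gamma>) (truth_set I canS canPref (canR I) (canV I) \<Gamma> \<phi>) \<noteq> {}"
  proof (intro ballI allI impI)
    fix \<Gamma> \<phi> assume G: "\<Gamma> \<in> I" and p: "is_prop \<phi>"
      and ne: "truth_set I canS canPref (canR I) (canV I) \<Gamma> \<phi> \<noteq> {}"
    let ?T = "truth_set I canS canPref (canR I) (canV I) \<Gamma> \<phi>"
    have Tchar: "(\<Delta>, \<psi>, i) \<in> ?T \<longleftrightarrow> (\<Delta>, \<psi>, i) \<in> canS \<Gamma> \<and> \<phi> \<in> \<Delta>" for \<Delta> \<psi> i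
      using truth_prop[OF canS_worlds[OF G] p] unfolding truth_set_def by auto
    obtain \<Delta>0 \<psi>0 i0 where "(\<Delta>0, \<psi>0, i0) \<in> ?T" using ne by auto
    then have D0: "(\<Delta>0, \<psi>0, i0) \<in> canS \<Gamma>" "\<phi> \<in> \<Delta>0" using Tchar by auto
    then have "MCS \<Delta>0" "cond_equiv \<Gamma> \<Delta>0" unfolding canS_def cond_class_def by auto
    then obtain \<Delta> where D: "MCS \<Delta>" "cond_equiv \<Gamma> \<Delta>" "cond_cons \<Gamma> \<phi> \<subseteq> \<Delta>" "\<phi> \<in> \<Delta>"
      using likely_exists[OF IM[OF G] p _ _ D0(2)] by blast
    have xS: "(\<Delta>, \<phi>, 0) \<in> canS \<Gamma>" using D p unfolding canS_def cond_class_def LCL_def by auto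
    then have xT: "(\<Delta>, \<phi>, 0) \<in> ?T" using Tchar D by auto
    have "(\<Delta>, \<phi>, 0) \<in> most (canPref \<Gamma>) ?T"
      unfolding most_def
    proof (intro CollectI conjI ballI impI xT)
      fix y assume yT: "y \<in> ?T"
      obtain \<Omega> \<chi> j where y: "y = (\<Omega>, \<chi>, j)" by (cases y) auto
      have "(\<Omega>, \<chi>, j) \<in> canS \<Gamma>" "\<phi> \<in> \<Omega>" using yT y Tchar by auto
      then show "((\<Delta>, \<phi>, 0), y) \<in> canPref \<Gamma>"
        using xS D(3) y unfolding canPref_def likely_def by auto
    qed
    then show "most (canPref \<Gamma>) ?T \<noteq> {}" by blast
  qed
  show ?thesis unfolding trust_model_def
    using R1 R2 R3 S1 S2 S3 P1 V1 L by blast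
qed

end
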